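(* Let $n\ge 3$, let the sites of an $n$-qubit chain be partitioned into nonempty consecutive intervals $L=\{1,\dots,a\}$, $C=\{a+1,\dots,a+k\}$, $R=\{a+k+1,\dots,n\}$, and let $W\in\mathrm{Sp}(2n,\mathbb{Z}_2)$ be the symplectic matrix of a Clifford unitary $U$ on the chain. Then $W$ satisfies the left wall condition around $C$ if and only if it satisfies the right wall condition around $C$. (All walls in Clifford circuits are two-sided.)
   Context: Pauli operators modulo phases are identified with $\mathbb{Z}_2^{2n}$ via $(p_1,q_1,\dots,p_n,q_n)\mapsto X^{p_1}Z^{q_1}\otimes\cdots\otimes X^{p_n}Z^{q_n}$; the symplectic form is $J=\bigoplus_{i=1}^n\begin{pmatrix}0&1\\1&0\end{pmatrix}$ (two Paulis commute iff $b^TJb'=0$), $\mathrm{Sp}(2n,\mathbb{Z}_2)=\{S:SJS^T=J\}$, and a Clifford unitary $U$ induces $W$ with $UP_bU^\dagger\propto P_{Wb}$. For a set of sites $S$, $V_S$ is the subspace of vectors supported on $S$, so $\mathbb{Z}_2^{2n}=V_L\oplus V_C\oplus V_R$, vectors written $(l,c,r)$. Left wall condition: for all integers $t\ge1$ and all $l\in V_L$, $W^t(l,0,0)\in V_L\oplus V_C\oplus\{0\}$. Right wall condition: for all integers $t\ge 1$ and all $r\in V_R$, $W^t(0,0,r)\in\{0\}\oplus V_C\oplus V_R$. *)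

theory Defs
  imports Main "HOL-Library.Z2"
begin

(* Vectors of Z_2^{2n} are functions nat => bit; coordinates 0..2n-1 (0-based).
   Coordinates 2(i-1) and 2(i-1)+1 are the (p_i, q_i) of site i (sites 1..n).
   Matrices are nat => nat => bit, only entries with indices < 2n are used. *)

definition site :: "nat \<Rightarrow> nat" where
  "site j = j div 2 + 1"

definition symp_J :: "nat \<Rightarrow> nat \<Rightarrow> nat \<Rightarrow> bit" where
  "symp_J n i j = (if i < 2*n \<and> j < 2*n \<and> i div 2 = j div 2 \<and> i \<noteq> j then 1 else 0)"

definition is_symplectic :: "nat \<Rightarrow> (nat \<Rightarrow> nat \<Rightarrow> bit) \<Rightarrow> bool" where
  "is_symplectic n W \<longleftrightarrow>
     (\<forall>i<2*n. \<forall>j<2*n.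
        (\<Sum>p<2*n. \<Sum>q<2*n. W i p * symp_J n p q * W j q) = symp_J n i j)"

definition mat_vec :: "nat \<Rightarrow> (nat \<Rightarrow> nat \<Rightarrow> bit) \<Rightarrow> (nat \<Rightarrow> bit) \<Rightarrow> (nat \<Rightarrow> bit)" where
  "mat_vec n W v = (\<lambda>i. if i < 2*n then (\<Sum>j<2*n. W i j * v j) else 0)"

definition supp_space :: "nat \<Rightarrow> nat set \<Rightarrow> (nat \<Rightarrow> bit) set" where
  "supp_space n S = {v. \<forall>j. v j \<noteq> 0 \<longrightarrow> j < 2*n \<and> site j \<in> S}"

definition left_wall :: "nat \<Rightarrow> (nat \<Rightarrow> nat \<Rightarrow> bit) \<Rightarrow> nat set \<Rightarrow> nat set \<Rightarrow> bool" where
  "left_wall n W L C \<longleftrightarrow>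
     (\<forall>t::nat. t \<ge> 1 \<longrightarrow> (\<forall>l \<in> supp_space n L.
        (mat_vec n W ^^ t) l \<in> supp_space n (L \<union> C)))"

definition right_wall :: "nat \<Rightarrow> (nat \<Rightarrow> nat \<Rightarrow> bit) \<Rightarrow> nat set \<Rightarrow> nat set \<Rightarrow> bool" where
  "right_wall n W C R \<longleftrightarrow>
     (\<forall>t::nat. t \<ge> 1 \<longrightarrow> (\<forall>r \<in> supp_space n R.
        (mat_vec n W ^^ t) r \<in> supp_space n (C \<union> R)))"

end

theory Submission
  imports Defs "HOL-Library.FuncSet"
begin

definition pr :: "nat \<Rightarrow> nat" where
  "pr i = (if even i then Suc i else i - 1)"

lemma pr_pr[simp]: "pr (pr i) = i"
  unfolding pr_def by (cases i) auto

lemma pr_lt[simp]: "i < 2*n \<Longrightarrow> pr i < 2*n"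
  unfolding pr_def by (auto elim!: evenE)

lemma pr_lt'[simp]: "i < n*2 \<Longrightarrow> pr i < n*2"
  using pr_lt[of i n] by (simp add: mult.commute)

lemma pr_inj: "pr i = pr j \<longleftrightarrow> i = j"
  by (metis pr_pr)

lemma site_pr[simp]: "site (pr i) = site i"
  unfolding pr_def site_def by (auto elim!: evenE oddE)

lemma J_eq: "i < 2*n \<Longrightarrow> q < 2*n \<Longrightarrow> symp_J n i q = (if q = pr i then 1 else 0)"
  unfolding symp_J_def pr_def by (auto elim!: evenE oddE)

lemma J_sum: "i < 2*n \<Longrightarrow> (\<Sum>q<2*n. symp_J n i q * y q) = y (pr i)"
proof -
  assume i: "i < 2*n"
  have "(\<Sum>q<2*n. symp_J n i q * y q) = (\<Sum>q<2*n. if q = pr i then y q else 0)"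
    by (rule sum.cong) (auto simp: J_eq i)
  also have "\<dots> = y (pr i)" using i by (simp add: sum.delta')
  finally show ?thesis .
qed

lemma bit_UNIV: "(UNIV :: bit set) = {0, 1}"
  by (auto intro: bit.exhaust)

lemma finite_bit: "finite (UNIV :: bit set)"
  by (simp add: bit_UNIV)

definition om :: "nat \<Rightarrow> (nat \<Rightarrow> bit) \<Rightarrow> (nat \<Rightarrow> bit) \<Rightarrow> bit" where
  "om n x y = (\<Sum>p<2*n. x p * y (pr p))"

definition ginv :: "nat \<Rightarrow> (nat \<Rightarrow> nat \<Rightarrow> bit) \<Rightarrow> (nat \<Rightarrow> bit) \<Rightarrow> (nat \<Rightarrow> bit)" where
  "ginv n W y = (\<lambda>j. if j < 2*n then (\<Sum>q<2*n. W q (pr j) * y (pr q)) else 0)"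

lemma om_sym: "om n x y = om n y x"
  unfolding om_def
  by (rule sum.reindex_bij_witness[where i=pr and j=pr]) (auto simp: mult.commute simp del: pr_lt intro: pr_lt)

lemma om_adj: "om n (mat_vec n W x) y = om n x (ginv n W y)"
proof -
  have "om n (mat_vec n W x) y = (\<Sum>p<2*n. \<Sum>j<2*n. W p j * x j * y (pr p))"
    unfolding om_def mat_vec_def by (intro sum.cong refl) (simp only: if_True lessThan_iff sum_distrib_right)
  also have "\<dots> = (\<Sum>j<2*n. \<Sum>p<2*n. W p j * x j * y (pr p))"
    by (rule sum.swap)
  also have "\<dots> = om n x (ginv n W y)"
    unfolding om_def ginv_def
  proof (intro sum.cong refl)
    fix j assume "j \<in> {..<2*n}"
    then have "pr j < 2*n" by simp
    then show "(\<Sum>p<2*n. W p j * x j * y (pr p)) = x j *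
      (if pr j < 2*n then \<Sum>q<2*n. W q (pr (pr j)) * y (pr q) else 0)"
      by (simp only: if_True pr_pr sum_distrib_left mult_ac)
  qed
  finally show ?thesis .
qed

lemma om_adj_pow: "om n ((mat_vec n W ^^ t) x) y = om n x ((ginv n W ^^ t) y)"
proof (induction t arbitrary: x y)
  case 0 then show ?case by simp
next
  case (Suc t)
  have "om n ((mat_vec n W ^^ Suc t) x) y = om n ((mat_vec n W ^^ t) (mat_vec n W x)) y"
    by (simp only: funpow_Suc_right o_apply)
  also have "\<dots> = om n (mat_vec n W x) ((ginv n W ^^ t) y)" by (rule Suc)
  also have "\<dots> = om n x (ginv n W ((ginv n W ^^ t) y))" by (rule om_adj)
  finally show ?case by (simp only: funpow.simps o_apply)
qed


lemma symp_simp: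
  assumes "is_symplectic n W" "i < 2*n" "j < 2*n"
  shows "(\<Sum>p<2*n. W i p * W j (pr p)) = symp_J n i j"
proof -
  have "(\<Sum>p<2*n. W i p * W j (pr p)) = (\<Sum>p<2*n. \<Sum>q<2*n. W i p * symp_J n p q * W j q)"
  proof (intro sum.cong refl)
    fix p assume "p \<in> {..<2*n}"
    then have p: "p < 2*n" by simp
    have "(\<Sum>q<2*n. W i p * symp_J n p q * W j q) = W i p * (\<Sum>q<2*n. symp_J n p q * W j q)"
      by (simp only: sum_distrib_left mult_ac)
    also have "\<dots> = W i p * W j (pr p)" using J_sum[OF p] by simp
    finally show "W i p * W j (pr p) = (\<Sum>q<2*n. W i p * symp_J n p q * W j q)" by simp
  qed
  also have "\<dots> = symp_J n i j" using assms unfolding is_symplectic_def by blast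
  finally show ?thesis .
qed

abbreviation Vn :: "nat \<Rightarrow> (nat \<Rightarrow> bit) set" where
  "Vn n \<equiv> supp_space n {1..n}"

lemma site_range: "j < 2*n \<Longrightarrow> site j \<in> {1..n}"
  unfolding site_def by auto

lemma Vn_iff: "v \<in> Vn n \<longleftrightarrow> (\<forall>j. j \<ge> 2*n \<longrightarrow> v j = 0)"
proof
  assume "v \<in> Vn n" then show "\<forall>j. j \<ge> 2*n \<longrightarrow> v j = 0"
    unfolding supp_space_def by (auto simp: not_less[symmetric])
next
  assume h: "\<forall>j. j \<ge> 2*n \<longrightarrow> v j = 0"
  show "v \<in> Vn n" unfolding supp_space_def
  proof (intro CollectI allI impI)
    fix j assume "v j \<noteq> 0"
    then have "j < 2*n" using h by (meson not_less)
    then show "j < 2*n \<and> site j \<in> {1..n}" using site_range by blast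
  qed
qed

lemma mat_vec_Vn: "mat_vec n W x \<in> Vn n"
  unfolding Vn_iff mat_vec_def by simp

lemma ginv_Vn: "ginv n W x \<in> Vn n"
  unfolding Vn_iff ginv_def by simp

lemma finite_Vn: "finite (Vn n)"
proof -
  have "Vn n \<subseteq> (\<lambda>h j. if j < 2*n then h j else 0) ` (PiE {..<2*n} (\<lambda>_. UNIV))"
  proof
    fix v assume v: "v \<in> Vn n"
    have "v = (\<lambda>j. if j < 2*n then restrict v {..<2*n} j else 0)"
      using v unfolding Vn_iff by (auto simp: not_less)
    moreover have "restrict v {..<2*n} \<in> PiE {..<2*n} (\<lambda>_. UNIV)" by simp
    ultimately show "v \<in> (\<lambda>h j. if j < 2*n then h j else 0) ` (PiE {..<2*n} (\<lambda>_. UNIV))"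
      by blast
  qed
  moreover have "finite (PiE {..<2*n} (\<lambda>_. UNIV :: bit set))"
    by (rule finite_PiE) (auto simp: finite_bit)
  ultimately show ?thesis by (meson finite_imageI finite_subset)
qed

lemma f_ginv:
  assumes "is_symplectic n W" "y \<in> Vn n"
  shows "mat_vec n W (ginv n W y) = y"
proof
  fix i
  show "mat_vec n W (ginv n W y) i = y i"
  proof (cases "i < 2*n")
    case False
    then show ?thesis using assms(2) unfolding Vn_iff mat_vec_def by simp
  next
    case True
    have "mat_vec n W (ginv n W y) i = (\<Sum>j<2*n. W i j * (\<Sum>q<2*n. W q (pr j) * y (pr q)))"
      unfolding mat_vec_def ginv_def using True
      apply (simp only: if_True)
      apply (rule sum.cong[OF refl])
      apply (simp only: lessThan_iff if_True)
      done
    also have "\<dots> = (\<Sum>j<2*n. \<Sum>q<2*n. W i j * W q (pr j) * y (pr q))"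
      by (simp only: sum_distrib_left mult_ac)
    also have "\<dots> = (\<Sum>q<2*n. \<Sum>j<2*n. W i j * W q (pr j) * y (pr q))"
      by (rule sum.swap)
    also have "\<dots> = (\<Sum>q<2*n. (\<Sum>j<2*n. W i j * W q (pr j)) * y (pr q))"
      by (simp only: sum_distrib_right)
    also have "\<dots> = (\<Sum>q<2*n. symp_J n i q * y (pr q))"
      using symp_simp[OF assms(1) True] by (intro sum.cong refl) auto
    also have "\<dots> = y i" using J_sum[OF True] by simp
    finally show ?thesis .
  qed
qed


lemma pow_in:
  assumes "\<forall>x\<in>V. f x \<in> V" "x \<in> V"
  shows "(f ^^ t) x \<in> V"
  using assms by (induction t) auto

lemma gf_id:
  assumes fin: "finite V" and fV: "\<forall>x\<in>V. f x \<in> V" and gV: "\<forall>x\<in>V. g x \<in> V"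
    and fg: "\<forall>x\<in>V. f (g x) = x" and x: "x \<in> V"
  shows "g (f x) = x"
proof -
  have "V \<subseteq> f ` V"
  proof
    fix y assume "y \<in> V"
    then have "y = f (g y)" "g y \<in> V" using fg gV by auto
    then show "y \<in> f ` V" by blast
  qed
  then have inj: "inj_on f V" using fin finite_surj_inj by blast
  have "f (g (f x)) = f x" using fg fV x by auto
  moreover have "g (f x) \<in> V" using fV gV x by auto
  ultimately show ?thesis using inj x by (meson inj_on_eq_iff)
qed

lemma gpow_fpow:
  assumes fV: "\<forall>x\<in>V. f x \<in> V" and gf: "\<forall>x\<in>V. g (f x) = x" and x: "x \<in> V"
  shows "(g ^^ i) ((f ^^ i) x) = x"
proof (induction i)
  case 0 then show ?case by simp
next
  case (Suc i)
  have e1: "(f ^^ Suc i) x = f ((f ^^ i) x)" by simp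
  have e2: "(g ^^ Suc i) z = (g ^^ i) (g z)" for z by (simp only: funpow_Suc_right o_apply)
  have "(g ^^ Suc i) ((f ^^ Suc i) x) = (g ^^ i) (g (f ((f ^^ i) x)))"
    by (simp only: e1 e2)
  also have "\<dots> = (g ^^ i) ((f ^^ i) x)" using gf pow_in[OF fV x] by simp
  finally show ?case using Suc by simp
qed

lemma fin_order:
  assumes fin: "finite V" and fV: "\<forall>x\<in>V. f x \<in> V" and gf: "\<forall>x\<in>V. g (f x) = x"
  shows "\<exists>M\<ge>2. \<forall>x\<in>V. (f ^^ M) x = x"
proof -
  define h where "h t = restrict (f ^^ t) V" for t
  have "range h \<subseteq> V \<rightarrow>\<^sub>E V"
    using pow_in[OF fV] unfolding h_def by auto
  moreover have "finite (V \<rightarrow>\<^sub>E V)" using fin by (intro finite_PiE) auto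
  ultimately have "finite (range h)" by (rule finite_subset)
  then have "\<not> inj h" using finite_imageD infinite_UNIV_nat by blast
  then obtain i j where ij: "i \<noteq> j" "h i = h j" unfolding inj_def by blast
  then obtain i j where ij: "i < j" "h i = h j"
    by (metis linorder_neqE_nat)
  have eq: "(f ^^ i) x = (f ^^ j) x" if "x \<in> V" for x
    using fun_cong[OF ij(2), of x] that unfolding h_def by simp
  have "(f ^^ (j - i)) x = x" if x: "x \<in> V" for x
  proof -
    have y: "(f ^^ (j - i)) x \<in> V" using pow_in[OF fV x] .
    have "(f ^^ (j - i)) x = (g ^^ i) ((f ^^ i) ((f ^^ (j - i)) x))"
      using gpow_fpow[OF fV gf y] by simp
    also have "\<dots> = (g ^^ i) ((f ^^ j) x)"
      using ij(1) by (simp add: funpow_add[symmetric, THEN fun_cong, simplified])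
    also have "\<dots> = (g ^^ i) ((f ^^ i) x)" using eq[OF x] by simp
    also have "\<dots> = x" using gpow_fpow[OF fV gf x] .
    finally show ?thesis .
  qed
  then have "(f ^^ (2 * (j - i))) x = x" if x: "x \<in> V" for x
    using that by (simp add: mult_2 funpow_add)
  moreover have "2 * (j - i) \<ge> 2" using ij(1) by simp
  ultimately show ?thesis by blast
qed

lemma g_as_f:
  assumes M: "M \<ge> 2" and fM: "\<forall>x\<in>V. (f ^^ M) x = x"
    and fV: "\<forall>x\<in>V. f x \<in> V" and gf: "\<forall>x\<in>V. g (f x) = x" and x: "x \<in> V"
  shows "(g ^^ t) x = (f ^^ ((M - 1) * t)) x"
proof -
  have g1: "g y = (f ^^ (M - 1)) y" if y: "y \<in> V" for y
  proof -
    have "M = Suc (M - 1)" using M by simp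
    then have "(f ^^ M) y = f ((f ^^ (M - 1)) y)" by (metis funpow.simps(2) o_apply)
    then have "g y = g (f ((f ^^ (M - 1)) y))" using fM y by simp
    also have "\<dots> = (f ^^ (M - 1)) y" using gf pow_in[OF fV y] by simp
    finally show ?thesis .
  qed
  show ?thesis
  proof (induction t)
    case 0 then show ?case by simp
  next
    case (Suc t)
    have "(g ^^ Suc t) x = g ((f ^^ ((M - 1) * t)) x)" using Suc by simp
    also have "\<dots> = (f ^^ (M - 1)) ((f ^^ ((M - 1) * t)) x)" using g1 pow_in[OF fV x] by simp
    also have "\<dots> = (f ^^ ((M - 1) * Suc t)) x" by (simp add: funpow_add)
    finally show ?case .
  qed
qed

lemma orbit_equiv:
  assumes fin: "finite V" and fV: "\<forall>x\<in>V. f x \<in> V" and gV: "\<forall>x\<in>V. g x \<in> V"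
    and fg: "\<forall>x\<in>V. f (g x) = x" and x: "x \<in> V"
  shows "(\<forall>t\<ge>1. P ((g ^^ t) x)) \<longleftrightarrow> (\<forall>t\<ge>1. P ((f ^^ t) x))"
proof -
  have gf: "\<forall>x\<in>V. g (f x) = x" using gf_id[OF fin fV gV fg] by blast
  obtain M where M: "M \<ge> 2" "\<forall>x\<in>V. (f ^^ M) x = x" using fin_order[OF fin fV gf] by blast
  have gM: "\<forall>x\<in>V. (g ^^ M) x = x"
  proof
    fix y assume y: "y \<in> V"
    have "(g ^^ M) ((f ^^ M) y) = y" using gpow_fpow[OF fV gf y] .
    then show "(g ^^ M) y = y" using M(2) y by simp
  qed
  have A: "(g ^^ t) x = (f ^^ ((M - 1) * t)) x" for t using g_as_f[OF M fV gf x] .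
  have B: "(f ^^ t) x = (g ^^ ((M - 1) * t)) x" for t using g_as_f[OF M(1) gM gV fg x] .
  have pos: "t \<ge> 1 \<Longrightarrow> (M - 1) * t \<ge> 1" for t using M(1)
    by (metis One_nat_def Suc_le_eq diff_Suc_1 less_eq_Suc_le mult_le_mono nat_mult_1
        numeral_2_eq_2 diff_le_mono)
  show ?thesis
  proof
    assume h: "\<forall>t\<ge>1. P ((g ^^ t) x)"
    show "\<forall>t\<ge>1. P ((f ^^ t) x)" using h B pos by metis
  next
    assume h: "\<forall>t\<ge>1. P ((f ^^ t) x)"
    show "\<forall>t\<ge>1. P ((g ^^ t) x)" using h A pos by metis
  qed
qed


lemma ortho:
  assumes AB: "{1..n} \<subseteq> A \<union> B" "A \<inter> B = {}" and v: "v \<in> Vn n"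
  shows "v \<in> supp_space n B \<longleftrightarrow> (\<forall>r\<in>supp_space n A. om n v r = 0)"
proof
  assume vB: "v \<in> supp_space n B"
  show "\<forall>r\<in>supp_space n A. om n v r = 0"
  proof
    fix r assume rA: "r \<in> supp_space n A"
    have "v p * r (pr p) = 0" for p
    proof (cases "v p = 0")
      case False
      then have "site p \<in> B" using vB unfolding supp_space_def by blast
      then have "site (pr p) \<notin> A" using AB(2) by auto
      then have "r (pr p) = 0" using rA unfolding supp_space_def by blast
      then show ?thesis by simp
    qed simp
    then show "om n v r = 0" unfolding om_def by (intro sum.neutral) blast
  qed
next
  assume h: "\<forall>r\<in>supp_space n A. om n v r = 0"
  show "v \<in> supp_space n B" unfolding supp_space_def
  proof (intro CollectI allI impI)
    fix j assume vj: "v j \<noteq> 0"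
    then have j: "j < 2*n" using v unfolding Vn_iff by (meson not_less)
    have "site j \<in> B"
    proof (rule ccontr)
      assume "site j \<notin> B"
      then have sA: "site j \<in> A" using site_range[OF j] AB(1) by blast
      define r :: "nat \<Rightarrow> bit" where "r i = (if i = pr j then 1 else 0)" for i
      have "r \<in> supp_space n A" unfolding supp_space_def r_def using j sA by auto
      then have "om n v r = 0" using h by blast
      moreover have "om n v r = (\<Sum>p<2*n. if p = j then v p else 0)"
        unfolding om_def r_def by (intro sum.cong refl) (auto simp: pr_inj)
      moreover have "(\<Sum>p<2*n. if p = j then v p else 0) = v j" using j by (simp add: sum.delta')
      ultimately show False using vj by simp
    qed
    then show "j < 2*n \<and> site j \<in> B" using j by blast
  qed
qed

lemma supp_mono: "S \<subseteq> T \<Longrightarrow> supp_space n S \<subseteq> supp_space n T"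
  unfolding supp_space_def by blast

theorem lemma3:
  fixes n a k :: nat and W :: "nat \<Rightarrow> nat \<Rightarrow> bit"
  assumes "n \<ge> 3" and "a \<ge> 1" and "k \<ge> 1" and "a + k < n"
    and "is_symplectic n W"
  shows "left_wall n W {1..a} {a+1..a+k} \<longleftrightarrow> right_wall n W {a+1..a+k} {a+k+1..n}"
proof -
  define f where "f = mat_vec n W"
  define g where "g = ginv n W"
  define L where "L = {1..a}"
  define C where "C = {a+1..a+k}"
  define R where "R = {a+k+1..n}"
  have fV: "\<forall>x\<in>Vn n. f x \<in> Vn n" unfolding f_def using mat_vec_Vn by blast
  have gV: "\<forall>x\<in>Vn n. g x \<in> Vn n" unfolding g_def using ginv_Vn by blast
  have fg: "\<forall>x\<in>Vn n. f (g x) = x" unfolding f_def g_def using f_ginv[OF assms(5)] by blast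
  have fpow: "t \<ge> 1 \<Longrightarrow> (f ^^ t) x \<in> Vn n" for t x
  proof -
    assume "t \<ge> 1" then obtain s where "t = Suc s" by (cases t) auto
    then show ?thesis by (simp only: funpow.simps o_apply f_def mat_vec_Vn)
  qed
  have gpow: "t \<ge> 1 \<Longrightarrow> (g ^^ t) x \<in> Vn n" for t x
  proof -
    assume "t \<ge> 1" then obtain s where "t = Suc s" by (cases t) auto
    then show ?thesis by (simp only: funpow.simps o_apply g_def ginv_Vn)
  qed
  have R1: "{1..n} \<subseteq> R \<union> (L \<union> C)" "R \<inter> (L \<union> C) = {}"
    unfolding L_def C_def R_def by auto
  have L1: "{1..n} \<subseteq> L \<union> (C \<union> R)" "L \<inter> (C \<union> R) = {}"
    unfolding L_def C_def R_def by auto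
  have RV: "supp_space n R \<subseteq> Vn n" unfolding R_def by (rule supp_mono) auto
  have "left_wall n W L C \<longleftrightarrow>
      (\<forall>t::nat. t \<ge> 1 \<longrightarrow> (\<forall>l \<in> supp_space n L. \<forall>r \<in> supp_space n R. om n ((f ^^ t) l) r = 0))"
    unfolding left_wall_def f_def[symmetric] using ortho[OF R1 fpow] by blast
  also have "\<dots> \<longleftrightarrow>
      (\<forall>t::nat. t \<ge> 1 \<longrightarrow> (\<forall>r \<in> supp_space n R. \<forall>l \<in> supp_space n L. om n ((g ^^ t) r) l = 0))"
    unfolding f_def g_def om_adj_pow by (metis om_sym)
  also have "\<dots> \<longleftrightarrow>
      (\<forall>t::nat. t \<ge> 1 \<longrightarrow> (\<forall>r \<in> supp_space n R. (g ^^ t) r \<in> supp_space n (C \<union> R)))"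
    using ortho[OF L1 gpow] by blast
  also have "\<dots> \<longleftrightarrow> (\<forall>r \<in> supp_space n R. \<forall>t::nat. t \<ge> 1 \<longrightarrow> (g ^^ t) r \<in> supp_space n (C \<union> R))"
    by blast
  also have "\<dots> \<longleftrightarrow> (\<forall>r \<in> supp_space n R. \<forall>t::nat. t \<ge> 1 \<longrightarrow> (f ^^ t) r \<in> supp_space n (C \<union> R))"
    using orbit_equiv[OF finite_Vn fV gV fg, where P = "\<lambda>v. v \<in> supp_space n (C \<union> R)"] RV
    by blast
  also have "\<dots> \<longleftrightarrow> right_wall n W C R"
    unfolding right_wall_def f_def by blast
  finally show ?thesis unfolding L_def C_def R_def .
qed

end
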